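(* Let $\mathcal{C}$ be a $\Bbbk$-linear Krull--Remak--Schmidt--Azumaya category all of whose endomorphism rings are artinian, and let $\mathcal{I}$ be an admissible ideal of $\mathcal{C}$. Then $\mathsf{Rad}(\mathcal{C}/\mathcal{I})=\mathsf{Rad}(\mathcal{C})/\mathcal{I}$, i.e. for all objects $X,Y$, $\mathsf{Rad}_{\mathcal{C}/\mathcal{I}}(X,Y)$ equals the image of $\mathsf{Rad}_{\mathcal{C}}(X,Y)$ in $\Hom_{\mathcal{C}}(X,Y)/\mathcal{I}(X,Y)$.
   Context: $\Bbbk$ is an algebraically closed field of characteristic $0$. The radical of a category $\mathcal{D}$: $\mathsf{Rad}_{\mathcal{D}}(X,Y)=\{f\in\Hom_{\mathcal{D}}(X,Y)\mid f\circ g\in\mathsf{J}(\End_{\mathcal{D}}(Y))\ \forall g\in\Hom_{\mathcal{D}}(Y,X)\}$, with $\mathsf{J}$ the Jacobson radical. $\mathcal{C}/\mathcal{I}$ has the objects of $\mathcal{C}$ and $\Hom_{\mathcal{C}/\mathcal{I}}(X,Y)=\Hom_{\mathcal{C}}(X,Y)/\mathcal{I}(X,Y)$. Krull--Remak--Schmidt--Azumaya: every object is isomorphic to an arbitrary direct sum of objects with local endomorphism rings, uniquely up to isomorphism. An ideal $\mathcal{I}$ is admissible if (1) every $f\in\mathcal{I}$ can be written $f=g_n\circ\cdots\circ g_1$ for finitely many morphisms $g_i$ none of which lies in $\mathcal{I}$, and (2) for each indecomposable $X$, $\End_{\mathcal{C}}(X)/\mathcal{I}(X,X)$ is finite-dimensional.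 *)

theory Defs
  imports "HOL-Algebra.Ideal"
begin

definition left_ideal :: "('a, 'b) ring_scheme \<Rightarrow> 'a set \<Rightarrow> bool" where
  "left_ideal R L \<longleftrightarrow> additive_subgroup L R \<and>
     (\<forall>x\<in>carrier R. \<forall>a\<in>L. x \<otimes>\<^bsub>R\<^esub> a \<in> L)"

definition right_ideal :: "('a, 'b) ring_scheme \<Rightarrow> 'a set \<Rightarrow> bool" where
  "right_ideal R L \<longleftrightarrow> additive_subgroup L R \<and>
     (\<forall>x\<in>carrier R. \<forall>a\<in>L. a \<otimes>\<^bsub>R\<^esub> x \<in> L)"

definition maximal_left_ideal :: "('a, 'b) ring_scheme \<Rightarrow> 'a set \<Rightarrow> bool" where
  "maximal_left_ideal R L \<longleftrightarrow> left_ideal R L \<and> L \<noteq> carrier R \<and>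
     (\<forall>L'. left_ideal R L' \<and> L \<subseteq> L' \<longrightarrow> L' = L \<or> L' = carrier R)"

definition jacobson :: "('a, 'b) ring_scheme \<Rightarrow> 'a set" where
  "jacobson R = {x \<in> carrier R. \<forall>L. maximal_left_ideal R L \<longrightarrow> x \<in> L}"

definition left_artinian :: "('a, 'b) ring_scheme \<Rightarrow> bool" where
  "left_artinian R \<longleftrightarrow>
     \<not> (\<exists>L :: nat \<Rightarrow> 'a set. \<forall>n. left_ideal R (L n) \<and> L (Suc n) \<subset> L n)"

definition right_artinian :: "('a, 'b) ring_scheme \<Rightarrow> bool" where
  "right_artinian R \<longleftrightarrow>
     \<not> (\<exists>L :: nat \<Rightarrow> 'a set. \<forall>n. right_ideal R (L n) \<and> L (Suc n) \<subset> L n)"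

definition artinian :: "('a, 'b) ring_scheme \<Rightarrow> bool" where
  "artinian R \<longleftrightarrow> left_artinian R \<and> right_artinian R"

definition local_ring :: "('a, 'b) ring_scheme \<Rightarrow> bool" where
  "local_ring R \<longleftrightarrow> \<one>\<^bsub>R\<^esub> \<noteq> \<zero>\<^bsub>R\<^esub> \<and>
     (\<forall>x\<in>carrier R. \<forall>y\<in>carrier R.
        x \<notin> Units R \<and> y \<notin> Units R \<longrightarrow> x \<oplus>\<^bsub>R\<^esub> y \<notin> Units R)"

text \<open>A category with object set Ob, hom-sets Hom X Y, composition
  Cmp X Y Z g f = g o f (for f : X -> Y, g : Y -> Z), identities, and a
  vector-space structure (Add, Zero, Smult) on each hom-set.\<close>
record ('o, 'm, 'k) lincat =
  Ob    :: "'o set"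
  Hom   :: "'o \<Rightarrow> 'o \<Rightarrow> 'm set"
  Cmp   :: "'o \<Rightarrow> 'o \<Rightarrow> 'o \<Rightarrow> 'm \<Rightarrow> 'm \<Rightarrow> 'm"
  Idm   :: "'o \<Rightarrow> 'm"
  Add   :: "'o \<Rightarrow> 'o \<Rightarrow> 'm \<Rightarrow> 'm \<Rightarrow> 'm"
  Zero  :: "'o \<Rightarrow> 'o \<Rightarrow> 'm"
  Smult :: "'o \<Rightarrow> 'o \<Rightarrow> 'k \<Rightarrow> 'm \<Rightarrow> 'm"

definition Neg :: "('o, 'm, 'k::field) lincat \<Rightarrow> 'o \<Rightarrow> 'o \<Rightarrow> 'm \<Rightarrow> 'm" where
  "Neg C X Y f = Smult C X Y (-1) f"

definition k_linear_category :: "('o, 'm, 'k::field) lincat \<Rightarrow> bool" where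
  "k_linear_category C \<longleftrightarrow>
    (\<forall>X\<in>Ob C. Idm C X \<in> Hom C X X) \<and>
    (\<forall>X\<in>Ob C. \<forall>Y\<in>Ob C. \<forall>Z\<in>Ob C. \<forall>f\<in>Hom C X Y. \<forall>g\<in>Hom C Y Z.
        Cmp C X Y Z g f \<in> Hom C X Z) \<and>
    (\<forall>W\<in>Ob C. \<forall>X\<in>Ob C. \<forall>Y\<in>Ob C. \<forall>Z\<in>Ob C.
       \<forall>f\<in>Hom C W X. \<forall>g\<in>Hom C X Y. \<forall>h\<in>Hom C Y Z.
        Cmp C W Y Z h (Cmp C W X Y g f) = Cmp C W X Z (Cmp C X Y Z h g) f) \<and>
    (\<forall>X\<in>Ob C. \<forall>Y\<in>Ob C. \<forall>f\<in>Hom C X Y.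
        Cmp C X Y Y (Idm C Y) f = f \<and> Cmp C X X Y f (Idm C X) = f) \<and>
    \<comment> \<open>each hom-set is a vector space over 'k\<close>
    (\<forall>X\<in>Ob C. \<forall>Y\<in>Ob C.
       Zero C X Y \<in> Hom C X Y \<and>
       (\<forall>f\<in>Hom C X Y. \<forall>g\<in>Hom C X Y. Add C X Y f g \<in> Hom C X Y) \<and>
       (\<forall>a. \<forall>f\<in>Hom C X Y. Smult C X Y a f \<in> Hom C X Y) \<and>
       (\<forall>f\<in>Hom C X Y. \<forall>g\<in>Hom C X Y. \<forall>h\<in>Hom C X Y.
          Add C X Y (Add C X Y f g) h = Add C X Y f (Add C X Y g h)) \<and>
       (\<forall>f\<in>Hom C X Y. \<forall>g\<in>Hom C X Y. Add C X Y f g = Add C X Y g f) \<and>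
       (\<forall>f\<in>Hom C X Y. Add C X Y (Zero C X Y) f = f) \<and>
       (\<forall>f\<in>Hom C X Y. Add C X Y f (Neg C X Y f) = Zero C X Y) \<and>
       (\<forall>a. \<forall>f\<in>Hom C X Y. \<forall>g\<in>Hom C X Y.
          Smult C X Y a (Add C X Y f g) = Add C X Y (Smult C X Y a f) (Smult C X Y a g)) \<and>
       (\<forall>a b. \<forall>f\<in>Hom C X Y.
          Smult C X Y (a + b) f = Add C X Y (Smult C X Y a f) (Smult C X Y b f)) \<and>
       (\<forall>a b. \<forall>f\<in>Hom C X Y. Smult C X Y (a * b) f = Smult C X Y a (Smult C X Y b f)) \<and>
       (\<forall>f\<in>Hom C X Y. Smult C X Y 1 f = f)) \<and>
    \<comment> \<open>composition is bilinear\<close>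
    (\<forall>X\<in>Ob C. \<forall>Y\<in>Ob C. \<forall>Z\<in>Ob C.
       (\<forall>f\<in>Hom C X Y. \<forall>f'\<in>Hom C X Y. \<forall>g\<in>Hom C Y Z.
          Cmp C X Y Z g (Add C X Y f f') = Add C X Z (Cmp C X Y Z g f) (Cmp C X Y Z g f')) \<and>
       (\<forall>f\<in>Hom C X Y. \<forall>g\<in>Hom C Y Z. \<forall>g'\<in>Hom C Y Z.
          Cmp C X Y Z (Add C Y Z g g') f = Add C X Z (Cmp C X Y Z g f) (Cmp C X Y Z g' f)) \<and>
       (\<forall>a. \<forall>f\<in>Hom C X Y. \<forall>g\<in>Hom C Y Z.
          Cmp C X Y Z g (Smult C X Y a f) = Smult C X Z a (Cmp C X Y Z g f) \<and>
          Cmp C X Y Z (Smult C Y Z a g) f = Smult C X Z a (Cmp C X Y Z g f)))"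

definition End_ring :: "('o, 'm, 'k) lincat \<Rightarrow> 'o \<Rightarrow> 'm ring" where
  "End_ring C X = \<lparr>carrier = Hom C X X, mult = Cmp C X X X, one = Idm C X,
                    zero = Zero C X X, add = Add C X X\<rparr>"

definition Rad :: "('o, 'm, 'k) lincat \<Rightarrow> 'o \<Rightarrow> 'o \<Rightarrow> 'm set" where
  "Rad C X Y = {f \<in> Hom C X Y. \<forall>g\<in>Hom C Y X. Cmp C Y X Y f g \<in> jacobson (End_ring C Y)}"

definition isomorphic :: "('o, 'm, 'k) lincat \<Rightarrow> 'o \<Rightarrow> 'o \<Rightarrow> bool" where
  "isomorphic C A B \<longleftrightarrow> A \<in> Ob C \<and> B \<in> Ob C \<and>
     (\<exists>f\<in>Hom C A B. \<exists>g\<in>Hom C B A. Cmp C A B A g f = Idm C A \<and> Cmp C B A B f g = Idm C B)"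

text \<open>S is a direct sum (coproduct) of the family D; each index is a pair
  (A, i) of a summand A and its injection i : A -> S.  Arbitrary (possibly
  infinite) families are allowed.\<close>
definition is_direct_sum :: "('o, 'm, 'k) lincat \<Rightarrow> 'o \<Rightarrow> ('o \<times> 'm) set \<Rightarrow> bool" where
  "is_direct_sum C S D \<longleftrightarrow> S \<in> Ob C \<and>
     (\<forall>(A, i)\<in>D. A \<in> Ob C \<and> i \<in> Hom C A S) \<and>
     (\<forall>Z\<in>Ob C. \<forall>h. (\<forall>(A, i)\<in>D. h (A, i) \<in> Hom C A Z) \<longrightarrow>
        (\<exists>!g. g \<in> Hom C S Z \<and> (\<forall>(A, i)\<in>D. Cmp C A S Z g i = h (A, i))))"

definition KRSA :: "('o, 'm, 'k) lincat \<Rightarrow> bool" where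
  "KRSA C \<longleftrightarrow>
    (\<forall>X\<in>Ob C. \<exists>D. is_direct_sum C X D \<and> (\<forall>(A, i)\<in>D. local_ring (End_ring C A))) \<and>
    (\<forall>X\<in>Ob C. \<forall>D D'.
       is_direct_sum C X D \<and> (\<forall>(A, i)\<in>D. local_ring (End_ring C A)) \<and>
       is_direct_sum C X D' \<and> (\<forall>(A, i)\<in>D'. local_ring (End_ring C A)) \<longrightarrow>
       (\<exists>\<sigma>. bij_betw \<sigma> D D' \<and> (\<forall>d\<in>D. isomorphic C (fst d) (fst (\<sigma> d)))))"

definition is_zero_object :: "('o, 'm, 'k) lincat \<Rightarrow> 'o \<Rightarrow> bool" where
  "is_zero_object C X \<longleftrightarrow> Idm C X = Zero C X X"

definition indecomposable :: "('o, 'm, 'k) lincat \<Rightarrow> 'o \<Rightarrow> bool" where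
  "indecomposable C X \<longleftrightarrow> X \<in> Ob C \<and> \<not> is_zero_object C X \<and>
     (\<forall>A B i j. A \<in> Ob C \<and> B \<in> Ob C \<and> i \<in> Hom C A X \<and> j \<in> Hom C B X \<and>
        (\<forall>Z\<in>Ob C. \<forall>f\<in>Hom C A Z. \<forall>g\<in>Hom C B Z.
           (\<exists>!h. h \<in> Hom C X Z \<and> Cmp C A X Z h i = f \<and> Cmp C B X Z h j = g))
        \<longrightarrow> is_zero_object C A \<or> is_zero_object C B)"

definition cat_ideal :: "('o, 'm, 'k::field) lincat \<Rightarrow> ('o \<Rightarrow> 'o \<Rightarrow> 'm set) \<Rightarrow> bool" where
  "cat_ideal C I \<longleftrightarrow>
    (\<forall>X\<in>Ob C. \<forall>Y\<in>Ob C.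
       I X Y \<subseteq> Hom C X Y \<and> Zero C X Y \<in> I X Y \<and>
       (\<forall>f\<in>I X Y. \<forall>g\<in>I X Y. Add C X Y f g \<in> I X Y) \<and>
       (\<forall>a. \<forall>f\<in>I X Y. Smult C X Y a f \<in> I X Y)) \<and>
    (\<forall>W\<in>Ob C. \<forall>X\<in>Ob C. \<forall>Y\<in>Ob C. \<forall>Z\<in>Ob C.
       \<forall>u\<in>Hom C W X. \<forall>f\<in>I X Y. \<forall>v\<in>Hom C Y Z.
         Cmp C W Y Z v (Cmp C W X Y f u) \<in> I W Z)"

fun chain_comp :: "('o, 'm, 'k) lincat \<Rightarrow> (nat \<Rightarrow> 'o) \<Rightarrow> (nat \<Rightarrow> 'm) \<Rightarrow> nat \<Rightarrow> 'm" where
  "chain_comp C Xs gs 0 = Idm C (Xs 0)"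
| "chain_comp C Xs gs (Suc n) = Cmp C (Xs 0) (Xs n) (Xs (Suc n)) (gs n) (chain_comp C Xs gs n)"

fun lin_comb :: "('o, 'm, 'k) lincat \<Rightarrow> 'o \<Rightarrow> 'o \<Rightarrow> ('k \<times> 'm) list \<Rightarrow> 'm" where
  "lin_comb C X Y [] = Zero C X Y"
| "lin_comb C X Y ((c, s) # cs) = Add C X Y (Smult C X Y c s) (lin_comb C X Y cs)"

definition fin_dim_quotient_End ::
  "('o, 'm, 'k::field) lincat \<Rightarrow> ('o \<Rightarrow> 'o \<Rightarrow> 'm set) \<Rightarrow> 'o \<Rightarrow> bool" where
  "fin_dim_quotient_End C I X \<longleftrightarrow>
     (\<exists>S. finite S \<and> S \<subseteq> Hom C X X \<and>
        (\<forall>f\<in>Hom C X X. \<exists>cs. set (map snd cs) \<subseteq> S \<and>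
            Add C X X f (Neg C X X (lin_comb C X X cs)) \<in> I X X))"

definition admissible :: "('o, 'm, 'k::field) lincat \<Rightarrow> ('o \<Rightarrow> 'o \<Rightarrow> 'm set) \<Rightarrow> bool" where
  "admissible C I \<longleftrightarrow> cat_ideal C I \<and>
    (\<forall>X\<in>Ob C. \<forall>Y\<in>Ob C. \<forall>f\<in>I X Y.
       \<exists>n\<ge>1. \<exists>Xs gs. Xs 0 = X \<and> Xs n = Y \<and>
         (\<forall>i\<le>n. Xs i \<in> Ob C) \<and>
         (\<forall>i<n. gs i \<in> Hom C (Xs i) (Xs (Suc i)) \<and> gs i \<notin> I (Xs i) (Xs (Suc i))) \<and>
         f = chain_comp C Xs gs n) \<and>
    (\<forall>X. indecomposable C X \<longrightarrow> fin_dim_quotient_End C I X)"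

definition coset :: "('o, 'm, 'k) lincat \<Rightarrow> ('o \<Rightarrow> 'o \<Rightarrow> 'm set) \<Rightarrow> 'o \<Rightarrow> 'o \<Rightarrow> 'm \<Rightarrow> 'm set" where
  "coset C I X Y f = {Add C X Y f i | i. i \<in> I X Y}"

definition quotient_cat ::
  "('o, 'm, 'k) lincat \<Rightarrow> ('o \<Rightarrow> 'o \<Rightarrow> 'm set) \<Rightarrow> ('o, 'm set, 'k) lincat" where
  "quotient_cat C I = \<lparr>
     Ob = Ob C,
     Hom = (\<lambda>X Y. coset C I X Y ` Hom C X Y),
     Cmp = (\<lambda>X Y Z G F. coset C I X Z (Cmp C X Y Z (SOME g. g \<in> G) (SOME f. f \<in> F))),
     Idm = (\<lambda>X. coset C I X X (Idm C X)),
     Add = (\<lambda>X Y F G. coset C I X Y (Add C X Y (SOME f. f \<in> F) (SOME g. g \<in> G))),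
     Zero = (\<lambda>X Y. coset C I X Y (Zero C X Y)),
     Smult = (\<lambda>X Y a F. coset C I X Y (Smult C X Y a (SOME f. f \<in> F))) \<rparr>"

definition algebraically_closed_field :: "'k::field itself \<Rightarrow> bool" where
  "algebraically_closed_field _ \<longleftrightarrow>
     (\<forall>n \<ge> 1. \<forall>a :: nat \<Rightarrow> 'k. a n \<noteq> 0 \<longrightarrow> (\<exists>x. (\<Sum>i\<le>n. a i * x ^ i) = 0))"

end

theory Submission
  imports Defs "HOL-Algebra.RingHom"
begin

locale klc =
  fixes C :: "('o, 'm, 'k::field) lincat"
  assumes kl: "k_linear_category C"
begin

lemmas ax = kl[unfolded k_linear_category_def]
lemmas ax1 = ax[THEN conjunct1]
lemmas ax2 = ax[THEN conjunct2, THEN conjunct1]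
lemmas ax3 = ax[THEN conjunct2, THEN conjunct2, THEN conjunct1]
lemmas ax4 = ax[THEN conjunct2, THEN conjunct2, THEN conjunct2, THEN conjunct1]
lemmas ax5 = ax[THEN conjunct2, THEN conjunct2, THEN conjunct2, THEN conjunct2, THEN conjunct1]
lemmas ax6 = ax[THEN conjunct2, THEN conjunct2, THEN conjunct2, THEN conjunct2, THEN conjunct2]

lemma idm[simp,intro]: "X \<in> Ob C \<Longrightarrow> Idm C X \<in> Hom C X X"
  using ax1 by blast
lemma cmp[intro]: "X \<in> Ob C \<Longrightarrow> Y \<in> Ob C \<Longrightarrow> Z \<in> Ob C \<Longrightarrow> f \<in> Hom C X Y \<Longrightarrow> g \<in> Hom C Y Z
  \<Longrightarrow> Cmp C X Y Z g f \<in> Hom C X Z"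
  using ax2 by blast
lemma assoc: "W \<in> Ob C \<Longrightarrow> X \<in> Ob C \<Longrightarrow> Y \<in> Ob C \<Longrightarrow> Z \<in> Ob C \<Longrightarrow>
  f \<in> Hom C W X \<Longrightarrow> g \<in> Hom C X Y \<Longrightarrow> h \<in> Hom C Y Z \<Longrightarrow>
  Cmp C W Y Z h (Cmp C W X Y g f) = Cmp C W X Z (Cmp C X Y Z h g) f"
  using ax3 by blast
lemma idl[simp]: "X \<in> Ob C \<Longrightarrow> Y \<in> Ob C \<Longrightarrow> f \<in> Hom C X Y \<Longrightarrow> Cmp C X Y Y (Idm C Y) f = f"
  using ax4 by blast
lemma idr[simp]: "X \<in> Ob C \<Longrightarrow> Y \<in> Ob C \<Longrightarrow> f \<in> Hom C X Y \<Longrightarrow> Cmp C X X Y f (Idm C X) = f"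
  using ax4 by blast

context fixes X Y assumes X: "X \<in> Ob C" and Y: "Y \<in> Ob C"
begin
lemmas h5 = bspec[OF bspec[OF ax5 X] Y]
lemmas h5c = h5[THEN conjunct2] h5[THEN conjunct2, THEN conjunct2]
  h5[THEN conjunct2, THEN conjunct2, THEN conjunct2] h5[THEN conjunct2, THEN conjunct2, THEN conjunct2, THEN conjunct2]
  h5[THEN conjunct2, THEN conjunct2, THEN conjunct2, THEN conjunct2, THEN conjunct2]
  h5[THEN conjunct2, THEN conjunct2, THEN conjunct2, THEN conjunct2, THEN conjunct2, THEN conjunct2]
lemmas hz = h5[THEN conjunct1]
lemmas ha = h5c(1)[THEN conjunct1] h5c(2)[THEN conjunct1] h5c(3)[THEN conjunct1] h5c(4)[THEN conjunct1] h5c(5)[THEN conjunct1] h5c(6)[THEN conjunct1] h5c(6)[THEN conjunct2, THEN conjunct1]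
lemma zero[simp,intro]: "Zero C X Y \<in> Hom C X Y"
  using hz by blast
lemma add[intro]: "f \<in> Hom C X Y \<Longrightarrow> g \<in> Hom C X Y \<Longrightarrow> Add C X Y f g \<in> Hom C X Y"
  using ha(1) by blast
lemma smult[intro]: "f \<in> Hom C X Y \<Longrightarrow> Smult C X Y a f \<in> Hom C X Y"
  using ha(2) by blast
lemma neg[intro]: "f \<in> Hom C X Y \<Longrightarrow> Neg C X Y f \<in> Hom C X Y"
  unfolding Neg_def by (rule smult)
lemma add_assoc: "f \<in> Hom C X Y \<Longrightarrow> g \<in> Hom C X Y \<Longrightarrow> h \<in> Hom C X Y \<Longrightarrow>
   Add C X Y (Add C X Y f g) h = Add C X Y f (Add C X Y g h)"
  using ha(3) by blast
lemma add_comm: "f \<in> Hom C X Y \<Longrightarrow> g \<in> Hom C X Y \<Longrightarrow> Add C X Y f g = Add C X Y g f"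
  using ha(4) by blast
lemma add_zl[simp]: "f \<in> Hom C X Y \<Longrightarrow> Add C X Y (Zero C X Y) f = f"
  using ha(5) by blast
lemma add_zr[simp]: "f \<in> Hom C X Y \<Longrightarrow> Add C X Y f (Zero C X Y) = f"
  using add_comm add_zl zero by metis
lemma add_neg[simp]: "f \<in> Hom C X Y \<Longrightarrow> Add C X Y f (Neg C X Y f) = Zero C X Y"
  using ha(6) by blast
lemma neg_add[simp]: "f \<in> Hom C X Y \<Longrightarrow> Add C X Y (Neg C X Y f) f = Zero C X Y"
  using add_comm add_neg neg by metis
lemma smult_add: "f \<in> Hom C X Y \<Longrightarrow> g \<in> Hom C X Y \<Longrightarrow>
   Smult C X Y a (Add C X Y f g) = Add C X Y (Smult C X Y a f) (Smult C X Y a g)"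
  using ha(7) by blast
lemma idem_zero: "f \<in> Hom C X Y \<Longrightarrow> Add C X Y f f = f \<Longrightarrow> f = Zero C X Y"
  by (metis add_assoc add_neg add_zr neg)
lemma add_cancel: "f \<in> Hom C X Y \<Longrightarrow> g \<in> Hom C X Y \<Longrightarrow> h \<in> Hom C X Y \<Longrightarrow>
   Add C X Y h f = Add C X Y h g \<Longrightarrow> f = g"
  by (metis add_assoc add_zl neg_add neg)
lemma smult_zero[simp]: "Smult C X Y a (Zero C X Y) = Zero C X Y"
  by (metis add_zl idem_zero smult smult_add zero)
end

context fixes X Y Z assumes X: "X \<in> Ob C" and Y: "Y \<in> Ob C" and Z: "Z \<in> Ob C"
begin
lemmas h6 = bspec[OF bspec[OF bspec[OF ax6 X] Y] Z]
lemma cmp_addr: "f \<in> Hom C X Y \<Longrightarrow> f' \<in> Hom C X Y \<Longrightarrow> g \<in> Hom C Y Z \<Longrightarrow>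
   Cmp C X Y Z g (Add C X Y f f') = Add C X Z (Cmp C X Y Z g f) (Cmp C X Y Z g f')"
  using h6 by blast
lemma cmp_addl: "f \<in> Hom C X Y \<Longrightarrow> g \<in> Hom C Y Z \<Longrightarrow> g' \<in> Hom C Y Z \<Longrightarrow>
   Cmp C X Y Z (Add C Y Z g g') f = Add C X Z (Cmp C X Y Z g f) (Cmp C X Y Z g' f)"
  using h6 by blast
lemma cmp_smultr: "f \<in> Hom C X Y \<Longrightarrow> g \<in> Hom C Y Z \<Longrightarrow>
   Cmp C X Y Z g (Smult C X Y a f) = Smult C X Z a (Cmp C X Y Z g f)"
  using h6 by blast
lemma cmp_smultl: "f \<in> Hom C X Y \<Longrightarrow> g \<in> Hom C Y Z \<Longrightarrow>
   Cmp C X Y Z (Smult C Y Z a g) f = Smult C X Z a (Cmp C X Y Z g f)"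
  using h6 by blast
lemma cmp_zr[simp]: "g \<in> Hom C Y Z \<Longrightarrow> Cmp C X Y Z g (Zero C X Y) = Zero C X Z"
  by (metis X Y Z cmp_addr idem_zero add_zl cmp zero)
lemma cmp_zl[simp]: "f \<in> Hom C X Y \<Longrightarrow> Cmp C X Y Z (Zero C Y Z) f = Zero C X Z"
  by (metis X Y Z cmp_addl idem_zero add_zl cmp zero)
lemma cmp_negr: "f \<in> Hom C X Y \<Longrightarrow> g \<in> Hom C Y Z \<Longrightarrow>
   Cmp C X Y Z g (Neg C X Y f) = Neg C X Z (Cmp C X Y Z g f)"
  unfolding Neg_def by (rule cmp_smultr)
lemma cmp_negl: "f \<in> Hom C X Y \<Longrightarrow> g \<in> Hom C Y Z \<Longrightarrow>
   Cmp C X Y Z (Neg C Y Z g) f = Neg C X Z (Cmp C X Y Z g f)"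
  unfolding Neg_def by (rule cmp_smultl)
end

lemma End_ring_simps[simp]: "carrier (End_ring C X) = Hom C X X" "mult (End_ring C X) = Cmp C X X X"
  "one (End_ring C X) = Idm C X" "zero (End_ring C X) = Zero C X X" "add (End_ring C X) = Add C X X"
  by (simp_all add: End_ring_def)

lemma End_ring_ring: assumes X: "X \<in> Ob C" shows "ring (End_ring C X)"
proof (rule ringI)
  show "abelian_group (End_ring C X)"
    by (rule abelian_groupI) (auto simp: X add add_assoc intro: add_comm[OF X X] intro!: bexI[of _ "Neg C X X _"] neg)
  show "monoid (End_ring C X)"
    by (rule monoidI) (auto simp: X assoc)
qed (auto simp: X cmp_addl cmp_addr)

end

lemma (in ring) add_subgroupI':
  assumes "H \<subseteq> carrier R" "\<zero> \<in> H" "\<And>a b. a \<in> H \<Longrightarrow> b \<in> H \<Longrightarrow> a \<oplus> b \<in> H"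
    "\<And>a. a \<in> H \<Longrightarrow> \<ominus> a \<in> H"
  shows "additive_subgroup H R"
proof (rule additive_subgroupI)
  show "subgroup H (add_monoid R)"
    by (rule add.subgroupI) (use assms in \<open>auto simp: a_inv_def\<close>)
qed

lemma (in ring) left_idealI':
  assumes "H \<subseteq> carrier R" "\<zero> \<in> H" "\<And>a b. a \<in> H \<Longrightarrow> b \<in> H \<Longrightarrow> a \<oplus> b \<in> H"
    "\<And>a. a \<in> H \<Longrightarrow> \<ominus> a \<in> H" "\<And>x a. x \<in> carrier R \<Longrightarrow> a \<in> H \<Longrightarrow> x \<otimes> a \<in> H"
  shows "left_ideal R H"
  unfolding left_ideal_def using add_subgroupI'[OF assms(1-4)] assms(5) by blast

lemma (in ring) left_idealD:
  assumes "left_ideal R L"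
  shows "L \<subseteq> carrier R" "\<zero> \<in> L" "\<And>a b. a \<in> L \<Longrightarrow> b \<in> L \<Longrightarrow> a \<oplus> b \<in> L"
    "\<And>a. a \<in> L \<Longrightarrow> \<ominus> a \<in> L" "\<And>x a. x \<in> carrier R \<Longrightarrow> a \<in> L \<Longrightarrow> x \<otimes> a \<in> L"
proof -
  have A: "additive_subgroup L R" and M: "\<forall>x\<in>carrier R. \<forall>a\<in>L. x \<otimes> a \<in> L"
    using assms unfolding left_ideal_def by auto
  show "L \<subseteq> carrier R" by (rule additive_subgroup.a_subset[OF A])
  show "\<zero> \<in> L" by (rule additive_subgroup.zero_closed[OF A])
  show "\<And>a b. a \<in> L \<Longrightarrow> b \<in> L \<Longrightarrow> a \<oplus> b \<in> L" by (rule additive_subgroup.a_closed[OF A])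
  show "\<And>a. a \<in> L \<Longrightarrow> \<ominus> a \<in> L" by (rule additive_subgroup.a_inv_closed[OF A])
  show "\<And>x a. x \<in> carrier R \<Longrightarrow> a \<in> L \<Longrightarrow> x \<otimes> a \<in> L" using M by blast
qed

lemma (in ring) left_ideal_one:
  assumes "left_ideal R L" "\<one> \<in> L" shows "L = carrier R"
  using left_idealD[OF assms(1)] assms(2) by (metis r_one subsetI subset_antisym)

lemma (in ring) maximal_span:
  assumes L: "maximal_left_ideal R L" and x: "x \<in> carrier R" "x \<notin> L" and y: "y \<in> carrier R"
  shows "\<exists>l\<in>L. \<exists>a\<in>carrier R. y = l \<oplus> a \<otimes> x"
proof -
  have LI: "left_ideal R L" using L unfolding maximal_left_ideal_def by blast
  note D = left_idealD[OF LI]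
  define L' where "L' = {l \<oplus> a \<otimes> x | l a. l \<in> L \<and> a \<in> carrier R}"
  have L'I: "left_ideal R L'"
  proof (rule left_idealI')
    show "L' \<subseteq> carrier R" unfolding L'_def using D(1) x by auto
    show "\<zero> \<in> L'" unfolding L'_def using D(2) x by (auto intro!: exI[of _ \<zero>])
  next
    fix a b assume "a \<in> L'" "b \<in> L'"
    then obtain l1 a1 l2 a2 where "a = l1 \<oplus> a1 \<otimes> x" "b = l2 \<oplus> a2 \<otimes> x" "l1 \<in> L" "l2 \<in> L"
      "a1 \<in> carrier R" "a2 \<in> carrier R" unfolding L'_def by auto
    moreover have "(l1 \<oplus> a1 \<otimes> x) \<oplus> (l2 \<oplus> a2 \<otimes> x) = (l1 \<oplus> l2) \<oplus> (a1 \<oplus> a2) \<otimes> x"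
      using calculation D(1) x by (simp add: l_distr a_ac subset_iff)
    ultimately show "a \<oplus> b \<in> L'" unfolding L'_def using D(3) by blast
  next
    fix a assume "a \<in> L'"
    then obtain l1 a1 where "a = l1 \<oplus> a1 \<otimes> x" "l1 \<in> L" "a1 \<in> carrier R" unfolding L'_def by auto
    moreover have "\<ominus> (l1 \<oplus> a1 \<otimes> x) = (\<ominus> l1) \<oplus> (\<ominus> a1) \<otimes> x"
      using calculation D(1) x by (simp add: minus_add l_minus subset_iff)
    ultimately show "\<ominus> a \<in> L'" unfolding L'_def using D(4) by blast
  next
    fix r a assume r: "r \<in> carrier R" and "a \<in> L'"
    then obtain l1 a1 where "a = l1 \<oplus> a1 \<otimes> x" "l1 \<in> L" "a1 \<in> carrier R" unfolding L'_def by auto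
    moreover have "r \<otimes> (l1 \<oplus> a1 \<otimes> x) = (r \<otimes> l1) \<oplus> (r \<otimes> a1) \<otimes> x"
      using calculation D(1) x r by (simp add: r_distr m_assoc subset_iff)
    ultimately show "r \<otimes> a \<in> L'" unfolding L'_def using D(5) r by blast
  qed
  have "L \<subseteq> L'"
  proof
    fix l assume l: "l \<in> L"
    then have "l = l \<oplus> \<zero> \<otimes> x" using D(1) x by auto
    then show "l \<in> L'" unfolding L'_def using l by blast
  qed
  moreover have "x = \<zero> \<oplus> \<one> \<otimes> x" using x by simp
  then have "x \<in> L'" unfolding L'_def using D(2) by blast
  ultimately have "L' = carrier R" using L L'I x unfolding maximal_left_ideal_def by blast
  then have "y \<in> L'" using y by simp
  then show ?thesis unfolding L'_def by blast
qed


lemma ring_surj_transfer: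
  fixes R :: "('a, 'c) ring_scheme" and S :: "('b, 'd) ring_scheme"
  assumes R: "ring R"
    and cl: "\<And>x. x \<in> carrier R \<Longrightarrow> h x \<in> carrier S"
    and surj: "\<And>s. s \<in> carrier S \<Longrightarrow> \<exists>x\<in>carrier R. s = h x"
    and hadd: "\<And>x y. x \<in> carrier R \<Longrightarrow> y \<in> carrier R \<Longrightarrow> h (x \<oplus>\<^bsub>R\<^esub> y) = h x \<oplus>\<^bsub>S\<^esub> h y"
    and hmul: "\<And>x y. x \<in> carrier R \<Longrightarrow> y \<in> carrier R \<Longrightarrow> h (x \<otimes>\<^bsub>R\<^esub> y) = h x \<otimes>\<^bsub>S\<^esub> h y"
    and hone: "h \<one>\<^bsub>R\<^esub> = \<one>\<^bsub>S\<^esub>" and hzero: "h \<zero>\<^bsub>R\<^esub> = \<zero>\<^bsub>S\<^esub>"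
  shows "ring S"
proof -
  interpret R: ring R by fact
  note hadd' = hadd[symmetric] and hmul' = hmul[symmetric]
  show ?thesis
  proof (rule ringI)
    show "abelian_group S"
    proof (rule abelian_groupI)
      fix x y assume "x \<in> carrier S" "y \<in> carrier S"
      then obtain a b where "a \<in> carrier R" "x = h a" "b \<in> carrier R" "y = h b" using surj by meson
      then show "x \<oplus>\<^bsub>S\<^esub> y \<in> carrier S" by (simp add: hadd' cl)
    next
      show "\<zero>\<^bsub>S\<^esub> \<in> carrier S" using cl[of "\<zero>\<^bsub>R\<^esub>"] hzero by simp
    next
      fix x y z assume "x \<in> carrier S" "y \<in> carrier S" "z \<in> carrier S"
      then obtain a b c where "a \<in> carrier R" "x = h a" "b \<in> carrier R" "y = h b" "c \<in> carrier R" "z = h c" using surj by meson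
      then show "x \<oplus>\<^bsub>S\<^esub> y \<oplus>\<^bsub>S\<^esub> z = x \<oplus>\<^bsub>S\<^esub> (y \<oplus>\<^bsub>S\<^esub> z)" by (simp add: hadd' R.add.m_assoc)
    next
      fix x y assume "x \<in> carrier S" "y \<in> carrier S"
      then obtain a b where "a \<in> carrier R" "x = h a" "b \<in> carrier R" "y = h b" using surj by meson
      then show "x \<oplus>\<^bsub>S\<^esub> y = y \<oplus>\<^bsub>S\<^esub> x" by (simp add: hadd' R.add.m_comm)
    next
      fix x assume "x \<in> carrier S"
      then obtain a where "a \<in> carrier R" "x = h a" using surj by meson
      then show "\<zero>\<^bsub>S\<^esub> \<oplus>\<^bsub>S\<^esub> x = x" by (simp add: hzero[symmetric] hadd')
    next
      fix x assume "x \<in> carrier S"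
      then obtain a where a: "a \<in> carrier R" "x = h a" using surj by blast
      have "h (\<ominus>\<^bsub>R\<^esub> a) \<oplus>\<^bsub>S\<^esub> x = \<zero>\<^bsub>S\<^esub>" using a by (simp add: hadd' hzero[symmetric] R.l_neg)
      then show "\<exists>y\<in>carrier S. y \<oplus>\<^bsub>S\<^esub> x = \<zero>\<^bsub>S\<^esub>" using a cl by blast
    qed
  next
    show "monoid S"
    proof (rule monoidI)
      fix x y assume "x \<in> carrier S" "y \<in> carrier S"
      then obtain a b where "a \<in> carrier R" "x = h a" "b \<in> carrier R" "y = h b" using surj by meson
      then show "x \<otimes>\<^bsub>S\<^esub> y \<in> carrier S" by (simp add: hmul' cl)
    next
      show "\<one>\<^bsub>S\<^esub> \<in> carrier S" using cl[of "\<one>\<^bsub>R\<^esub>"] hone by simp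
    next
      fix x y z assume "x \<in> carrier S" "y \<in> carrier S" "z \<in> carrier S"
      then obtain a b c where "a \<in> carrier R" "x = h a" "b \<in> carrier R" "y = h b" "c \<in> carrier R" "z = h c" using surj by meson
      then show "x \<otimes>\<^bsub>S\<^esub> y \<otimes>\<^bsub>S\<^esub> z = x \<otimes>\<^bsub>S\<^esub> (y \<otimes>\<^bsub>S\<^esub> z)" by (simp add: hmul' R.m_assoc)
    next
      fix x assume "x \<in> carrier S"
      then obtain a where "a \<in> carrier R" "x = h a" using surj by meson
      then show "\<one>\<^bsub>S\<^esub> \<otimes>\<^bsub>S\<^esub> x = x" by (simp add: hone[symmetric] hmul')
    next
      fix x assume "x \<in> carrier S"
      then obtain a where "a \<in> carrier R" "x = h a" using surj by meson
      then show "x \<otimes>\<^bsub>S\<^esub> \<one>\<^bsub>S\<^esub> = x" by (simp add: hone[symmetric] hmul')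
    qed
  next
      fix x y z assume "x \<in> carrier S" "y \<in> carrier S" "z \<in> carrier S"
      then obtain a b c where "a \<in> carrier R" "x = h a" "b \<in> carrier R" "y = h b" "c \<in> carrier R" "z = h c" using surj by meson
      then show "(x \<oplus>\<^bsub>S\<^esub> y) \<otimes>\<^bsub>S\<^esub> z = x \<otimes>\<^bsub>S\<^esub> z \<oplus>\<^bsub>S\<^esub> y \<otimes>\<^bsub>S\<^esub> z" by (simp add: hmul' hadd' R.l_distr)
  next
      fix x y z assume "x \<in> carrier S" "y \<in> carrier S" "z \<in> carrier S"
      then obtain a b c where "a \<in> carrier R" "x = h a" "b \<in> carrier R" "y = h b" "c \<in> carrier R" "z = h c" using surj by meson
      then show "z \<otimes>\<^bsub>S\<^esub> (x \<oplus>\<^bsub>S\<^esub> y) = z \<otimes>\<^bsub>S\<^esub> x \<oplus>\<^bsub>S\<^esub> z \<otimes>\<^bsub>S\<^esub> y" by (simp add: hmul' hadd' R.r_distr)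
  qed
qed

locale surj_hom = ring_hom_ring +
  assumes surj: "h ` carrier R = carrier S"
begin

lemma preimage_left_ideal:
  assumes "left_ideal S L" shows "left_ideal R {x \<in> carrier R. h x \<in> L}"
proof -
  note D = S.left_idealD[OF assms]
  show ?thesis
  proof (rule R.left_idealI')
    show "\<And>a b. a \<in> {x \<in> carrier R. h x \<in> L} \<Longrightarrow> b \<in> {x \<in> carrier R. h x \<in> L} \<Longrightarrow> a \<oplus> b \<in> {x \<in> carrier R. h x \<in> L}"
      using D(3) by simp
    show "\<And>a. a \<in> {x \<in> carrier R. h x \<in> L} \<Longrightarrow> \<ominus> a \<in> {x \<in> carrier R. h x \<in> L}"
      using D(4) by simp
    show "\<And>x a. x \<in> carrier R \<Longrightarrow> a \<in> {x \<in> carrier R. h x \<in> L} \<Longrightarrow> x \<otimes> a \<in> {x \<in> carrier R. h x \<in> L}"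
      using D(5) by simp
  qed (use D(2) in auto)
qed

lemma image_left_ideal:
  assumes "left_ideal R L" shows "left_ideal S (h ` L)"
proof -
  note D = R.left_idealD[OF assms]
  show ?thesis
  proof (rule S.left_idealI')
    show "h ` L \<subseteq> carrier S" using D(1) by auto
    show "\<zero>\<^bsub>S\<^esub> \<in> h ` L" using D(2) by (metis hom_zero image_eqI)
    show "\<And>a b. a \<in> h ` L \<Longrightarrow> b \<in> h ` L \<Longrightarrow> a \<oplus>\<^bsub>S\<^esub> b \<in> h ` L"
    proof -
      fix a b assume "a \<in> h ` L" "b \<in> h ` L"
      then obtain x y where "x \<in> L" "y \<in> L" "a = h x" "b = h y" by auto
      moreover have "h (x \<oplus> y) = h x \<oplus>\<^bsub>S\<^esub> h y" using calculation D(1) by (intro hom_add) auto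
      ultimately show "a \<oplus>\<^bsub>S\<^esub> b \<in> h ` L" using D(3) by (metis image_eqI)
    qed
    show "\<And>a. a \<in> h ` L \<Longrightarrow> \<ominus>\<^bsub>S\<^esub> a \<in> h ` L"
    proof -
      fix a assume "a \<in> h ` L"
      then obtain x where "x \<in> L" "a = h x" by auto
      moreover have "h (\<ominus> x) = \<ominus>\<^bsub>S\<^esub> h x" using calculation D(1) by (intro hom_a_inv) auto
      ultimately show "\<ominus>\<^bsub>S\<^esub> a \<in> h ` L" using D(4) by (metis image_eqI)
    qed
    show "\<And>x a. x \<in> carrier S \<Longrightarrow> a \<in> h ` L \<Longrightarrow> x \<otimes>\<^bsub>S\<^esub> a \<in> h ` L"
    proof -
      fix x a assume "x \<in> carrier S" "a \<in> h ` L"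
      then obtain b where "b \<in> L" "a = h b" by blast
      moreover obtain r where "r \<in> carrier R" "x = h r" using surj \<open>x \<in> carrier S\<close> by blast
      moreover have "h (r \<otimes> b) = h r \<otimes>\<^bsub>S\<^esub> h b" using calculation D(1) by (intro hom_mult) auto
      ultimately show "x \<otimes>\<^bsub>S\<^esub> a \<in> h ` L" using D(5) by (metis image_eqI)
    qed
  qed
qed

lemma jac_image:
  assumes x: "x \<in> jacobson R" shows "h x \<in> jacobson S"
proof -
  have xc: "x \<in> carrier R" using x unfolding jacobson_def by auto
  have "h x \<in> L" if M: "maximal_left_ideal S L" for L
  proof -
    have LI: "left_ideal S L" and LN: "L \<noteq> carrier S" using M unfolding maximal_left_ideal_def by auto
    note D = S.left_idealD[OF LI]
    define P where "P = {x \<in> carrier R. h x \<in> L}"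
    have PI: "left_ideal R P" unfolding P_def by (rule preimage_left_ideal[OF LI])
    have PN: "P \<noteq> carrier R"
    proof
      assume "P = carrier R"
      then have "\<one>\<^bsub>S\<^esub> \<in> L" using R.one_closed unfolding P_def by (metis (mono_tags, lifting) hom_one mem_Collect_eq)
      then show False using S.left_ideal_one[OF LI] LN by blast
    qed
    have "maximal_left_ideal R P" unfolding maximal_left_ideal_def
    proof (intro conjI PI PN allI impI)
      fix L' assume a: "left_ideal R L' \<and> P \<subseteq> L'"
      have L'I: "left_ideal S (h ` L')" using a image_left_ideal by blast
      have "L \<subseteq> h ` L'"
      proof
        fix s assume "s \<in> L"
        then obtain r where "r \<in> carrier R" "s = h r" using D(1) surj by auto
        then show "s \<in> h ` L'" using a \<open>s \<in> L\<close> unfolding P_def by auto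
      qed
      then have "h ` L' = L \<or> h ` L' = carrier S" using M L'I unfolding maximal_left_ideal_def by blast
      then show "L' = P \<or> L' = carrier R"
      proof
        assume "h ` L' = L"
        then have "L' \<subseteq> P" unfolding P_def using R.left_idealD(1)[of L'] a by auto
        then show ?thesis using a by blast
      next
        assume "h ` L' = carrier S"
        then obtain l where l: "l \<in> L'" "h l = \<one>\<^bsub>S\<^esub>" by (metis S.one_closed imageE)
        have lc: "l \<in> carrier R" using l R.left_idealD(1)[of L'] a by auto
        have "\<one> \<ominus> l \<in> P" unfolding P_def using lc l D(2)
          by (simp add: a_minus_def hom_add S.r_neg)
        then have "(\<one> \<ominus> l) \<oplus> l \<in> L'" using a R.left_idealD(3)[of L'] l by auto
        then have "\<one> \<in> L'" using lc by (simp add: a_minus_def R.add.m_assoc R.l_neg)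
        then show ?thesis using R.left_ideal_one a by blast
      qed
    qed
    then show ?thesis using x unfolding jacobson_def P_def by auto
  qed
  then show ?thesis unfolding jacobson_def using xc by auto
qed

lemma jac_preimage:
  assumes K: "\<And>L. maximal_left_ideal R L \<Longrightarrow> {x \<in> carrier R. h x = \<zero>\<^bsub>S\<^esub>} \<subseteq> L"
    and x: "x \<in> carrier R" "h x \<in> jacobson S"
  shows "x \<in> jacobson R"
proof -
  have "x \<in> L" if M: "maximal_left_ideal R L" for L
  proof -
    have LI: "left_ideal R L" and LN: "L \<noteq> carrier R" using M unfolding maximal_left_ideal_def by auto
    note D = R.left_idealD[OF LI]
    have KL: "\<And>y. y \<in> carrier R \<Longrightarrow> h y = \<zero>\<^bsub>S\<^esub> \<Longrightarrow> y \<in> L" using K[OF M] by auto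
    have bk: "y \<in> L" if yc: "y \<in> carrier R" and yh: "h y \<in> h ` L" for y
    proof -
      obtain l where l: "l \<in> L" "h y = h l" using yh by auto
      have lc: "l \<in> carrier R" using l D(1) by auto
      have "h (y \<ominus> l) = \<zero>\<^bsub>S\<^esub>" using l lc yc by (simp add: a_minus_def hom_add S.r_neg)
      then have "y \<ominus> l \<in> L" using KL lc yc by auto
      then have "(y \<ominus> l) \<oplus> l \<in> L" using D(3) l by auto
      then show "y \<in> L" using lc yc by (simp add: a_minus_def R.add.m_assoc R.l_neg)
    qed
    have hLI: "left_ideal S (h ` L)" by (rule image_left_ideal[OF LI])
    have "maximal_left_ideal S (h ` L)" unfolding maximal_left_ideal_def
    proof (intro conjI hLI allI impI)
      show "h ` L \<noteq> carrier S"
      proof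
        assume "h ` L = carrier S"
        then have "\<one> \<in> L" using bk[of \<one>] by simp
        then show False using R.left_ideal_one[OF LI] LN by blast
      qed
    next
      fix L' assume a: "left_ideal S L' \<and> h ` L \<subseteq> L'"
      define P where "P = {x \<in> carrier R. h x \<in> L'}"
      have PI: "left_ideal R P" unfolding P_def using preimage_left_ideal a by blast
      have "L \<subseteq> P" unfolding P_def using a D(1) by auto
      then have "P = L \<or> P = carrier R" using M PI unfolding maximal_left_ideal_def by blast
      moreover have "h ` P = L'"
        unfolding P_def using surj S.left_idealD(1)[of L'] a by auto
      ultimately show "L' = h ` L \<or> L' = carrier S" using surj by auto
    qed
    then have "h x \<in> h ` L" using x unfolding jacobson_def by auto
    then show ?thesis using bk x by auto
  qed
  then show ?thesis unfolding jacobson_def using x by auto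
qed
end

locale klci = klc C for C :: "('o, 'm, 'k::field) lincat" +
  fixes I :: "'o \<Rightarrow> 'o \<Rightarrow> 'm set"
  assumes ideal: "cat_ideal C I"
begin

context fixes X Y assumes X: "X \<in> Ob C" and Y: "Y \<in> Ob C"
begin
lemma I_sub: "I X Y \<subseteq> Hom C X Y" using ideal X Y unfolding cat_ideal_def by blast
lemma I_zero: "Zero C X Y \<in> I X Y" using ideal X Y unfolding cat_ideal_def by blast
lemma I_add: "f \<in> I X Y \<Longrightarrow> g \<in> I X Y \<Longrightarrow> Add C X Y f g \<in> I X Y"
  using ideal X Y unfolding cat_ideal_def by blast
lemma I_smult: "f \<in> I X Y \<Longrightarrow> Smult C X Y a f \<in> I X Y"
  using ideal X Y unfolding cat_ideal_def by blast
lemma I_neg: "f \<in> I X Y \<Longrightarrow> Neg C X Y f \<in> I X Y"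
  unfolding Neg_def by (rule I_smult)
lemma I_hom: "f \<in> I X Y \<Longrightarrow> f \<in> Hom C X Y" using I_sub by blast

lemma coset_add: assumes a: "a \<in> Hom C X Y" and k: "k \<in> I X Y"
  shows "coset C I X Y (Add C X Y a k) = coset C I X Y a"
proof
  show "coset C I X Y (Add C X Y a k) \<subseteq> coset C I X Y a"
    unfolding coset_def using a k I_hom I_add by (auto simp: add_assoc[OF X Y])
  show "coset C I X Y a \<subseteq> coset C I X Y (Add C X Y a k)"
  proof
    fix x assume "x \<in> coset C I X Y a"
    then obtain i where i: "i \<in> I X Y" "x = Add C X Y a i" unfolding coset_def by auto
    have "Add C X Y (Add C X Y a k) (Add C X Y (Neg C X Y k) i) = x"
      using i a k I_hom[of k] I_hom[of i]
      by (simp add: add_assoc[OF X Y] neg[OF X Y] add[OF X Y] add_assoc[OF X Y, symmetric, of k] X Y)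
    moreover have "Add C X Y (Neg C X Y k) i \<in> I X Y" using I_add I_neg i k by blast
    ultimately show "x \<in> coset C I X Y (Add C X Y a k)" unfolding coset_def by blast
  qed
qed

lemma coset_self: "a \<in> Hom C X Y \<Longrightarrow> a \<in> coset C I X Y a"
  unfolding coset_def using I_zero add_zr[OF X Y] by force

lemma some_coset: assumes a: "a \<in> Hom C X Y"
  shows "\<exists>k\<in>I X Y. (SOME g. g \<in> coset C I X Y a) = Add C X Y a k"
proof -
  have "(SOME g. g \<in> coset C I X Y a) \<in> coset C I X Y a" using coset_self[OF a] by (rule someI)
  then show ?thesis unfolding coset_def by auto
qed

lemma coset_zero: "coset C I X Y (Zero C X Y) = I X Y"
proof -
  have "\<And>i. i \<in> I X Y \<Longrightarrow> Add C X Y (Zero C X Y) i = i" using I_hom add_zl[OF X Y] by blast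
  then show ?thesis unfolding coset_def by force
qed

lemma coset_ker: "a \<in> Hom C X Y \<Longrightarrow> coset C I X Y a = coset C I X Y (Zero C X Y) \<longleftrightarrow> a \<in> I X Y"
  by (metis coset_zero coset_self coset_add add_zl zero X Y)

lemma add_coset: assumes f: "f \<in> Hom C X Y" and g: "g \<in> Hom C X Y"
  shows "Add (quotient_cat C I) X Y (coset C I X Y f) (coset C I X Y g) = coset C I X Y (Add C X Y f g)"
proof -
  obtain i j where i: "i \<in> I X Y" "(SOME h. h \<in> coset C I X Y f) = Add C X Y f i"
    and j: "j \<in> I X Y" "(SOME h. h \<in> coset C I X Y g) = Add C X Y g j"
    using some_coset f g by blast
  have ih: "i \<in> Hom C X Y" "j \<in> Hom C X Y" using i j I_hom by auto
  have "Add C X Y (Add C X Y f i) (Add C X Y g j) = Add C X Y (Add C X Y f g) (Add C X Y i j)"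
    using f g ih by (metis add_assoc[OF X Y] add_comm[OF X Y] add[OF X Y])
  then show ?thesis unfolding quotient_cat_def using i j f g ih
    by (simp add: coset_add add[OF X Y] I_add)
qed
end

lemma I_cmpl: "X \<in> Ob C \<Longrightarrow> Y \<in> Ob C \<Longrightarrow> Z \<in> Ob C \<Longrightarrow> f \<in> I X Y \<Longrightarrow> v \<in> Hom C Y Z
  \<Longrightarrow> Cmp C X Y Z v f \<in> I X Z"
  using ideal unfolding cat_ideal_def by (metis idm idr I_hom)
lemma I_cmpr: "W \<in> Ob C \<Longrightarrow> X \<in> Ob C \<Longrightarrow> Y \<in> Ob C \<Longrightarrow> f \<in> I X Y \<Longrightarrow> u \<in> Hom C W X
  \<Longrightarrow> Cmp C W X Y f u \<in> I W Y"
proof -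
  assume a: "W \<in> Ob C" "X \<in> Ob C" "Y \<in> Ob C" "f \<in> I X Y" "u \<in> Hom C W X"
  then have "Cmp C W Y Y (Idm C Y) (Cmp C W X Y f u) \<in> I W Y"
    using ideal unfolding cat_ideal_def by blast
  then show ?thesis using a I_hom cmp by simp
qed

lemma cmp_coset:
  assumes X: "X \<in> Ob C" and Y: "Y \<in> Ob C" and Z: "Z \<in> Ob C"
    and f: "f \<in> Hom C X Y" and g: "g \<in> Hom C Y Z"
  shows "Cmp (quotient_cat C I) X Y Z (coset C I Y Z g) (coset C I X Y f) = coset C I X Z (Cmp C X Y Z g f)"
proof -
  obtain i where i: "i \<in> I X Y" "(SOME h. h \<in> coset C I X Y f) = Add C X Y f i"
    using some_coset[OF X Y f] by blast
  obtain j where j: "j \<in> I Y Z" "(SOME h. h \<in> coset C I Y Z g) = Add C Y Z g j"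
    using some_coset[OF Y Z g] by blast
  have ih: "i \<in> Hom C X Y" "j \<in> Hom C Y Z" using i j I_hom X Y Z by auto
  define f' where "f' = Add C X Y f i"
  have f': "f' \<in> Hom C X Y" unfolding f'_def using f ih add X Y by blast
  have "Cmp C X Y Z (Add C Y Z g j) f' = Add C X Z (Cmp C X Y Z g f') (Cmp C X Y Z j f')"
    using cmp_addl[OF X Y Z f' g ih(2)] .
  also have "Cmp C X Y Z g f' = Add C X Z (Cmp C X Y Z g f) (Cmp C X Y Z g i)"
    unfolding f'_def using cmp_addr[OF X Y Z f ih(1) g] .
  finally have e: "Cmp C X Y Z (Add C Y Z g j) f' =
     Add C X Z (Cmp C X Y Z g f) (Add C X Z (Cmp C X Y Z g i) (Cmp C X Y Z j f'))"
    using add_assoc[OF X Z] cmp[OF X Y Z] f g f' ih by simp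
  have k: "Add C X Z (Cmp C X Y Z g i) (Cmp C X Y Z j f') \<in> I X Z"
    using I_add[OF X Z] I_cmpl[OF X Y Z i(1) g] I_cmpr[OF X Y Z j(1) f'] by blast
  show ?thesis unfolding quotient_cat_def using i j e k
    by (simp add: f'_def[symmetric] coset_add[OF X Z] cmp[OF X Y Z] f g)
qed

lemma R_ainv: assumes X: "X \<in> Ob C" and r: "r \<in> Hom C X X"
  shows "\<ominus>\<^bsub>End_ring C X\<^esub> r = Neg C X X r"
proof -
  interpret R: ring "End_ring C X" by (rule End_ring_ring[OF X])
  show ?thesis by (rule R.minus_equality) (use X r in \<open>auto simp: neg\<close>)
qed

lemma quot_hom: assumes Y: "Y \<in> Ob C"
  shows "surj_hom (End_ring C Y) (End_ring (quotient_cat C I) Y) (coset C I Y Y)"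
proof -
  have Sring: "ring (End_ring (quotient_cat C I) Y)"
  proof (rule ring_surj_transfer[OF End_ring_ring[OF Y], where h = "coset C I Y Y"])
  qed (auto simp: End_ring_def quotient_cat_def add_coset[OF Y Y, unfolded quotient_cat_def, simplified]
        cmp_coset[OF Y Y Y, unfolded quotient_cat_def, simplified])
  show ?thesis
  proof (intro surj_hom.intro ring_hom_ringI[OF End_ring_ring[OF Y] Sring] surj_hom_axioms.intro)
  qed (auto simp: End_ring_def quotient_cat_def add_coset[OF Y Y, unfolded quotient_cat_def, simplified]
        cmp_coset[OF Y Y Y, unfolded quotient_cat_def, simplified])
qed

end

lemma (in ring) left_ideal_finsum:
  assumes L: "left_ideal R L" and fin: "finite D" and f: "\<And>d. d \<in> D \<Longrightarrow> f d \<in> L"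
  shows "finsum R f D \<in> L"
  using fin f
proof (induction D rule: finite_induct)
  case empty then show ?case using left_idealD(2)[OF L] by simp
next
  case (insert x F)
  have sub: "L \<subseteq> carrier R" using left_idealD(1)[OF L] .
  have "finsum R f (insert x F) = f x \<oplus> finsum R f F"
    using insert sub by (intro finsum_insert) auto
  then show ?case using insert left_idealD(3)[OF L] by auto
qed

lemma (in ring) solve_t:
  assumes "t \<in> carrier R" "c \<in> carrier R" "t \<otimes> (\<one> \<ominus> c) = \<one>"
  shows "t = \<one> \<oplus> t \<otimes> c"
proof -
  have "t \<otimes> (\<one> \<ominus> c) = t \<ominus> t \<otimes> c" using assms by (simp add: a_minus_def r_distr r_minus)
  then have "\<one> \<oplus> t \<otimes> c = (t \<ominus> t \<otimes> c) \<oplus> t \<otimes> c" using assms by simp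
  also have "\<dots> = t" using assms by (simp add: a_minus_def add.m_assoc l_neg)
  finally show ?thesis by simp
qed

context klci begin

lemma id_notin_I: assumes adm: "admissible C I" and A: "A \<in> Ob C" shows "Idm C A \<notin> I A A"
proof
  assume a: "Idm C A \<in> I A A"
  have ad: "\<forall>X\<in>Ob C. \<forall>Y\<in>Ob C. \<forall>f\<in>I X Y.
       \<exists>n\<ge>1. \<exists>Xs gs. Xs 0 = X \<and> Xs n = Y \<and>
         (\<forall>i\<le>n. Xs i \<in> Ob C) \<and>
         (\<forall>i<n. gs i \<in> Hom C (Xs i) (Xs (Suc i)) \<and> gs i \<notin> I (Xs i) (Xs (Suc i))) \<and>
         f = chain_comp C Xs gs n" using adm unfolding admissible_def by (elim conjE)
  obtain n Xs gs where n: "n \<ge> 1" "Xs 0 = A" "\<forall>i\<le>n. Xs i \<in> Ob C"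
      "\<forall>i<n. gs i \<in> Hom C (Xs i) (Xs (Suc i)) \<and> gs i \<notin> I (Xs i) (Xs (Suc i))"
    using bspec[OF bspec[OF bspec[OF ad A] A] a] by blast
  have g: "gs 0 \<in> Hom C A (Xs 1)" "gs 0 \<notin> I A (Xs 1)" using n by auto
  have X1: "Xs 1 \<in> Ob C" using n by auto
  have "Cmp C A A (Xs 1) (gs 0) (Idm C A) \<in> I A (Xs 1)" by (rule I_cmpl[OF A A X1 a g(1)])
  then show False using g A X1 by simp
qed

lemma nonunit_I: assumes A: "A \<in> Ob C" and noid: "Idm C A \<notin> I A A" and c: "c \<in> I A A"
  shows "c \<notin> Units (End_ring C A)"
proof
  assume "c \<in> Units (End_ring C A)"
  then obtain v where v: "v \<in> Hom C A A" "Cmp C A A A v c = Idm C A" unfolding Units_def by auto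
  have "Cmp C A A A v c \<in> I A A" by (rule I_cmpl[OF A A A c v(1)])
  then show False using v noid by simp
qed

lemma local_inv:
  assumes A: "A \<in> Ob C" and loc: "local_ring (End_ring C A)" and c: "c \<in> Hom C A A"
    and cn: "c \<notin> Units (End_ring C A)"
  shows "\<exists>t\<in>Hom C A A. t = Add C A A (Idm C A) (Cmp C A A A t c)"
proof -
  interpret R: ring "End_ring C A" by (rule End_ring_ring[OF A])
  let ?R = "End_ring C A"
  define u where "u = \<one>\<^bsub>?R\<^esub> \<ominus>\<^bsub>?R\<^esub> c"
  have uc: "u \<in> carrier ?R" unfolding u_def using R.minus_closed[OF R.one_closed, of c] c by simp
  have cc: "c \<in> carrier ?R" using c by simp
  have "u \<oplus>\<^bsub>?R\<^esub> c = \<one>\<^bsub>?R\<^esub>" unfolding u_def using cc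
    by (simp del: End_ring_simps add: a_minus_def R.add.m_assoc R.l_neg)
  moreover have "\<one>\<^bsub>?R\<^esub> \<in> Units ?R" by (rule R.Units_one_closed)
  ultimately have "u \<in> Units ?R" using loc uc c cn unfolding local_ring_def by force
  then obtain t where t: "t \<in> carrier ?R" "t \<otimes>\<^bsub>?R\<^esub> u = \<one>\<^bsub>?R\<^esub>" unfolding Units_def by auto
  have "t = \<one>\<^bsub>?R\<^esub> \<oplus>\<^bsub>?R\<^esub> t \<otimes>\<^bsub>?R\<^esub> c" using R.solve_t[of t c] t cc unfolding u_def by blast
  then show ?thesis using t by auto
qed

end

locale dsum = klci C I for C :: "('o, 'm, 'k::field) lincat" and I +
  fixes Y D p
  assumes Y: "Y \<in> Ob C"
   and DOb: "\<And>d. d \<in> D \<Longrightarrow> fst d \<in> Ob C"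
   and Di: "\<And>d. d \<in> D \<Longrightarrow> snd d \<in> Hom C (fst d) Y"
   and uniq: "\<And>g g'. g \<in> Hom C Y Y \<Longrightarrow> g' \<in> Hom C Y Y \<Longrightarrow>
        (\<forall>d\<in>D. Cmp C (fst d) Y Y g (snd d) = snd d) \<Longrightarrow>
        (\<forall>d\<in>D. Cmp C (fst d) Y Y g' (snd d) = snd d) \<Longrightarrow> g = g'"
   and loc: "\<And>d. d \<in> D \<Longrightarrow> local_ring (End_ring C (fst d))"
   and p: "\<And>d. d \<in> D \<Longrightarrow> p d \<in> Hom C Y (fst d)"
   and pi: "\<And>d e. d \<in> D \<Longrightarrow> e \<in> D \<Longrightarrow> Cmp C (fst e) Y (fst d) (p d) (snd e) =
        (if e = d then Idm C (fst d) else Zero C (fst e) (fst d))"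
begin

definition e where "e d = Cmp C Y (fst d) Y (snd d) (p d)"

lemma e_hom: "d \<in> D \<Longrightarrow> e d \<in> Hom C Y Y"
  unfolding e_def using Y DOb Di p by blast

lemma nz: "d \<in> D \<Longrightarrow> Idm C (fst d) \<noteq> Zero C (fst d) (fst d)"
  using loc unfolding local_ring_def by simp

lemma inz: "d \<in> D \<Longrightarrow> snd d \<noteq> Zero C (fst d) Y"
proof
  assume d: "d \<in> D" and z: "snd d = Zero C (fst d) Y"
  have "Cmp C (fst d) Y (fst d) (p d) (snd d) = Zero C (fst d) (fst d)"
    using z cmp_zr[OF DOb[OF d] Y DOb[OF d] p[OF d]] by simp
  then show False using pi[OF d d] nz[OF d] by simp
qed

lemma e_i: assumes d: "d \<in> D" and d': "d' \<in> D"
  shows "Cmp C (fst d') Y Y (e d) (snd d') = (if d' = d then snd d else Zero C (fst d') Y)"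
proof -
  have "Cmp C (fst d') Y Y (e d) (snd d') = Cmp C (fst d') (fst d) Y (snd d) (Cmp C (fst d') Y (fst d) (p d) (snd d'))"
    unfolding e_def using assoc[OF DOb[OF d'] Y DOb[OF d] Y Di[OF d'] p[OF d] Di[OF d]] by simp
  then show ?thesis using pi[OF d d'] DOb[OF d] DOb[OF d'] Di[OF d] Y by (auto split: if_splits)
qed

lemma e_e: assumes d: "d \<in> D" and d': "d' \<in> D"
  shows "Cmp C Y Y Y (e d) (e d') = (if d = d' then e d else Zero C Y Y)"
proof -
  have "Cmp C Y Y Y (e d) (e d') = Cmp C Y (fst d') Y (Cmp C (fst d') Y Y (e d) (snd d')) (p d')"
    unfolding e_def[of d'] using assoc[OF Y DOb[OF d'] Y Y p[OF d'] Di[OF d'] e_hom[OF d]] by simp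
  then show ?thesis using e_i[OF d d'] DOb[OF d'] p[OF d'] Y by (auto simp: e_def)
qed

lemma finite_D: assumes art: "artinian (End_ring C Y)" shows "finite D"
proof (rule ccontr)
  assume "infinite D"
  then obtain f :: "nat \<Rightarrow> _" where f: "inj f" "range f \<subseteq> D" using infinite_countable_subset by blast
  interpret R: ring "End_ring C Y" by (rule End_ring_ring[OF Y])
  have fD: "\<And>n. f n \<in> D" using f by auto
  define LL where "LL n = {r \<in> Hom C Y Y. \<forall>k<n. Cmp C (fst (f k)) Y Y r (snd (f k)) = Zero C (fst (f k)) Y}" for n
  have "left_ideal (End_ring C Y) (LL n) \<and> LL (Suc n) \<subset> LL n" for n
  proof
    show "left_ideal (End_ring C Y) (LL n)"
    proof (rule R.left_idealI')
      show "LL n \<subseteq> carrier (End_ring C Y)" unfolding LL_def by auto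
      show "\<zero>\<^bsub>End_ring C Y\<^esub> \<in> LL n" unfolding LL_def using fD DOb Di Y by auto
      show "a \<oplus>\<^bsub>End_ring C Y\<^esub> b \<in> LL n" if "a \<in> LL n" "b \<in> LL n" for a b
        using that fD DOb Di Y unfolding LL_def by (auto simp: cmp_addl add)
      show "\<ominus>\<^bsub>End_ring C Y\<^esub> a \<in> LL n" if a: "a \<in> LL n" for a
      proof -
        have ah: "a \<in> Hom C Y Y" using a unfolding LL_def by auto
        have "Cmp C (fst (f k)) Y Y (Neg C Y Y a) (snd (f k)) = Zero C (fst (f k)) Y" if k: "k < n" for k
        proof -
          have "Cmp C (fst (f k)) Y Y (Neg C Y Y a) (snd (f k)) = Neg C (fst (f k)) Y (Cmp C (fst (f k)) Y Y a (snd (f k)))"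
            by (rule cmp_negl[OF DOb[OF fD] Y Y Di[OF fD] ah])
          also have "\<dots> = Zero C (fst (f k)) Y" using a k unfolding LL_def
            by (simp add: Neg_def smult_zero[OF DOb[OF fD] Y])
          finally show ?thesis .
        qed
        then show ?thesis unfolding LL_def using R_ainv[OF Y ah] neg[OF Y Y ah] by simp
      qed
      show "x \<otimes>\<^bsub>End_ring C Y\<^esub> a \<in> LL n" if "x \<in> carrier (End_ring C Y)" "a \<in> LL n" for x a
        using that fD DOb Di Y unfolding LL_def by (auto simp: assoc[symmetric])
    qed
    have "e (f n) \<in> LL n" unfolding LL_def using e_hom[OF fD] e_i[OF fD fD] f(1)
      by (auto dest: injD)
    moreover have "e (f n) \<notin> LL (Suc n)" unfolding LL_def using e_i[OF fD fD] inz[OF fD] by auto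
    moreover have "LL (Suc n) \<subseteq> LL n" unfolding LL_def by auto
    ultimately show "LL (Suc n) \<subset> LL n" by blast
  qed
  then show False using art unfolding artinian_def left_artinian_def by blast
qed

lemma sum_id: assumes fin: "finite D" shows "finsum (End_ring C Y) e D = Idm C Y"
proof -
  interpret R: ring "End_ring C Y" by (rule End_ring_ring[OF Y])
  define s where "s = finsum (End_ring C Y) e D"
  have eR: "e \<in> D \<rightarrow> carrier (End_ring C Y)" using e_hom by auto
  have s: "s \<in> Hom C Y Y" unfolding s_def using R.finsum_closed[OF eR] by simp
  have "Cmp C (fst d) Y Y s (snd d) = snd d" if d: "d \<in> D" for d
  proof -
    have "s \<otimes>\<^bsub>End_ring C Y\<^esub> e d = finsum (End_ring C Y) (\<lambda>d'. e d' \<otimes>\<^bsub>End_ring C Y\<^esub> e d) D"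
      unfolding s_def using R.finsum_ldistr[OF fin _ eR, of "e d"] e_hom[OF d] by simp
    also have "\<dots> = finsum (End_ring C Y) (\<lambda>d'. if d = d' then e d' else \<zero>\<^bsub>End_ring C Y\<^esub>) D"
      by (intro R.add.finprod_cong') (auto simp: e_e d e_hom zero[OF Y Y])
    also have "\<dots> = e d" by (rule R.finsum_singleton[OF d fin eR])
    finally have se: "Cmp C Y Y Y s (e d) = e d" by simp
    have "Cmp C (fst d) Y Y s (snd d) = Cmp C (fst d) Y Y s (Cmp C (fst d) Y Y (e d) (snd d))"
      using e_i[OF d d] by simp
    also have "\<dots> = Cmp C (fst d) Y Y (Cmp C Y Y Y s (e d)) (snd d)"
      using assoc[OF DOb[OF d] Y Y Y Di[OF d] e_hom[OF d] s] .
    also have "\<dots> = snd d" using se e_i[OF d d] by simp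
    finally show ?thesis .
  qed
  moreover have "\<forall>d\<in>D. Cmp C (fst d) Y Y (Idm C Y) (snd d) = snd d" using DOb Di Y by simp
  ultimately show ?thesis using uniq[OF s idm[OF Y]] unfolding s_def by blast
qed


lemma maxL_I:
  assumes fin: "finite D" and noid: "\<forall>A\<in>Ob C. Idm C A \<notin> I A A"
    and M: "maximal_left_ideal (End_ring C Y) L"
  shows "I Y Y \<subseteq> L"
proof -
  interpret R: ring "End_ring C Y" by (rule End_ring_ring[OF Y])
  have LI: "left_ideal (End_ring C Y) L" using M unfolding maximal_left_ideal_def by blast
  note LD = R.left_idealD[OF LI]
  have LH: "L \<subseteq> Hom C Y Y" using LD(1) by simp
  have key: "Cmp C Y Y Y z (e d) \<in> L" if zI: "z \<in> I Y Y" and d: "d \<in> D" for z d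
  proof -
    define A where "A = fst d"
    define i where "i = snd d"
    define pp where "pp = p d"
    have A: "A \<in> Ob C" unfolding A_def using DOb[OF d] .
    have i: "i \<in> Hom C A Y" unfolding A_def i_def using Di[OF d] .
    have pp: "pp \<in> Hom C Y A" unfolding A_def pp_def using p[OF d] .
    have ppi: "Cmp C A Y A pp i = Idm C A" unfolding A_def pp_def i_def using pi[OF d d] by simp
    have ed: "e d = Cmp C Y A Y i pp" unfolding e_def A_def i_def pp_def ..
    have z: "z \<in> Hom C Y Y" using I_hom[OF Y Y zI] .
    define x where "x = Cmp C Y Y Y z (e d)"
    have eh: "e d \<in> Hom C Y Y" by (rule e_hom[OF d])
    have xh: "x \<in> Hom C Y Y" unfolding x_def using z eh Y by blast
    have ee: "Cmp C Y Y Y (e d) (e d) = e d" using e_e[OF d d] by simp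
    show ?thesis
    proof (cases "e d \<in> L")
      case True
      have "Cmp C Y Y Y x (e d) = x" unfolding x_def
        using assoc[OF Y Y Y Y eh eh z] ee by simp
      moreover have "x \<otimes>\<^bsub>End_ring C Y\<^esub> e d \<in> L" using LD(5)[of x "e d"] xh True by simp
      ultimately show ?thesis unfolding x_def by simp
    next
      case False
      show ?thesis
      proof (rule ccontr)
        assume xL: "Cmp C Y Y Y z (e d) \<notin> L"
        obtain l a where l: "l \<in> L" and a: "a \<in> Hom C Y Y"
          and ela: "e d = Add C Y Y l (Cmp C Y Y Y a x)"
          using R.maximal_span[OF M _ _, of x "e d"] xh eh xL unfolding x_def by auto
        have lh: "l \<in> Hom C Y Y" using l LH by auto
        define zi where "zi = Cmp C A Y Y z i"
        have zi: "zi \<in> I A Y" unfolding zi_def by (rule I_cmpr[OF A Y Y zI i])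
        define pa where "pa = Cmp C Y Y A pp a"
        have pa: "pa \<in> Hom C Y A" unfolding pa_def using a pp A Y by blast
        define c where "c = Cmp C A Y A pa zi"
        have cI: "c \<in> I A A" unfolding c_def by (rule I_cmpl[OF A Y A zi pa])
        have ch: "c \<in> Hom C A A" using I_hom[OF A A cI] .
        have cn: "c \<notin> Units (End_ring C A)" using nonunit_I[OF A _ cI] noid A by blast
        obtain t where t: "t \<in> Hom C A A" and teq: "t = Add C A A (Idm C A) (Cmp C A A A t c)"
          using local_inv[OF A _ ch cn] loc[OF d] unfolding A_def by blast
        define q where "q = Cmp C Y A Y i (Cmp C Y A A t pp)"
        have tp: "Cmp C Y A A t pp \<in> Hom C Y A" using t pp A Y by blast
        have qh: "q \<in> Hom C Y Y" unfolding q_def using tp i A Y by blast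
        have tc: "Cmp C A A A t c \<in> Hom C A A" using t ch A by blast
        define m where "m = Cmp C Y A Y i (Cmp C Y A A (Cmp C A A A t c) pp)"
        have mh: "m \<in> Hom C Y Y" unfolding m_def using tc pp i A Y by blast
        have qi: "Cmp C A Y Y q i = Cmp C A A Y i t"
        proof -
          have "Cmp C A Y Y q i = Cmp C A A Y i (Cmp C A Y A (Cmp C Y A A t pp) i)"
            unfolding q_def using assoc[OF A Y A Y i tp i] by simp
          also have "Cmp C A Y A (Cmp C Y A A t pp) i = t"
            using assoc[OF A Y A A i pp t] ppi t A by simp
          finally show ?thesis .
        qed
        have q1: "Cmp C Y Y Y q (e d) = q"
        proof -
          have "Cmp C Y Y Y q (e d) = Cmp C Y A Y (Cmp C A Y Y q i) pp"
            unfolding ed using assoc[OF Y A Y Y pp i qh] .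
          also have "\<dots> = Cmp C Y A Y (Cmp C A A Y i t) pp" by (simp only: qi)
          also have "\<dots> = q" unfolding q_def using assoc[OF Y A A Y pp t i] by simp
          finally show ?thesis .
        qed
        have q3: "Cmp C Y Y Y q (Cmp C Y Y Y a x) = m"
          unfolding m_def q_def x_def ed c_def pa_def zi_def
          using A Y i pp t a z by (simp add: assoc cmp)
        have q4: "q = Add C Y Y (e d) m"
        proof -
          have "Cmp C Y A A t pp = Cmp C Y A A (Add C A A (Idm C A) (Cmp C A A A t c)) pp"
            by (rule arg_cong[OF teq])
          also have "\<dots> = Add C Y A (Cmp C Y A A (Idm C A) pp) (Cmp C Y A A (Cmp C A A A t c) pp)"
            by (rule cmp_addl[OF Y A A pp idm[OF A] tc])
          also have "Cmp C Y A A (Idm C A) pp = pp" using idl[OF Y A pp] .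
          finally have "Cmp C Y A A t pp = Add C Y A pp (Cmp C Y A A (Cmp C A A A t c) pp)" .
          then show ?thesis unfolding q_def m_def ed
            using cmp_addr[OF Y A Y pp _ i, of "Cmp C Y A A (Cmp C A A A t c) pp"] tc pp A Y by auto
        qed
        have "q = Add C Y Y (Cmp C Y Y Y q l) m"
          using q1 ela cmp_addr[OF Y Y Y lh _ qh, of "Cmp C Y Y Y a x"] q3 a xh Y by auto
        then have "Add C Y Y m (e d) = Add C Y Y m (Cmp C Y Y Y q l)"
          using q4 add_comm[OF Y Y] mh eh qh lh Y by (metis cmp)
        then have "e d = Cmp C Y Y Y q l"
          using add_cancel[OF Y Y] eh mh qh lh Y by blast
        moreover have "q \<otimes>\<^bsub>End_ring C Y\<^esub> l \<in> L" using LD(5)[of q l] qh l by simp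
        ultimately show False using False by simp
      qed
    qed
  qed
  show ?thesis
  proof
    fix z assume zI: "z \<in> I Y Y"
    have z: "z \<in> Hom C Y Y" using I_hom[OF Y Y zI] .
    have eR: "e \<in> D \<rightarrow> carrier (End_ring C Y)" using e_hom by auto
    have "z = z \<otimes>\<^bsub>End_ring C Y\<^esub> finsum (End_ring C Y) e D"
      using sum_id[OF fin] z Y by simp
    also have "\<dots> = finsum (End_ring C Y) (\<lambda>d. z \<otimes>\<^bsub>End_ring C Y\<^esub> e d) D"
      using R.finsum_rdistr[OF fin _ eR, of z] z by simp
    also have "\<dots> \<in> L"
      using R.left_ideal_finsum[OF LI fin, of "\<lambda>d. z \<otimes>\<^bsub>End_ring C Y\<^esub> e d"] key[OF zI] by simp
    finally show "z \<in> L" .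
  qed
qed

end

context klci begin
lemma maxL_contains:
  assumes krsa: "KRSA C" and art: "\<forall>X\<in>Ob C. artinian (End_ring C X)"
    and noid: "\<forall>A\<in>Ob C. Idm C A \<notin> I A A"
    and Y: "Y \<in> Ob C" and M: "maximal_left_ideal (End_ring C Y) L"
  shows "I Y Y \<subseteq> L"
proof -
  obtain D where ds: "is_direct_sum C Y D" and lc: "\<forall>(A, i)\<in>D. local_ring (End_ring C A)"
    using krsa Y unfolding KRSA_def by blast
  have DA: "\<forall>(A, i)\<in>D. A \<in> Ob C \<and> i \<in> Hom C A Y" using ds unfolding is_direct_sum_def by blast
  have DOb: "\<And>d. d \<in> D \<Longrightarrow> fst d \<in> Ob C" and Di: "\<And>d. d \<in> D \<Longrightarrow> snd d \<in> Hom C (fst d) Y"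
    using DA by auto
  have univ: "\<And>Z h. Z \<in> Ob C \<Longrightarrow> (\<forall>(A, i)\<in>D. h (A, i) \<in> Hom C A Z) \<Longrightarrow>
     (\<exists>!g. g \<in> Hom C Y Z \<and> (\<forall>(A, i)\<in>D. Cmp C A Y Z g i = h (A, i)))"
    using ds unfolding is_direct_sum_def by blast
  have loc: "\<And>d. d \<in> D \<Longrightarrow> local_ring (End_ring C (fst d))" using lc by auto
  have "\<forall>d\<in>D. \<exists>g. g \<in> Hom C Y (fst d) \<and> (\<forall>e\<in>D. Cmp C (fst e) Y (fst d) g (snd e) =
          (if e = d then Idm C (fst d) else Zero C (fst e) (fst d)))"
  proof
    fix d assume d: "d \<in> D"
    let ?h = "\<lambda>e. if e = d then Idm C (fst d) else Zero C (fst e) (fst d)"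
    have hh: "?h e \<in> Hom C (fst e) (fst d)" if e: "e \<in> D" for e
      using zero[OF DOb[OF e] DOb[OF d]] idm[OF DOb[OF d]] by simp
    have "\<forall>(A, i)\<in>D. ?h (A, i) \<in> Hom C A (fst d)"
    proof (intro ballI, clarify)
      fix A i assume "(A, i) \<in> D"
      from hh[OF this] show "?h (A, i) \<in> Hom C A (fst d)" by simp
    qed
    from univ[OF DOb[OF d] this] obtain g where
      "g \<in> Hom C Y (fst d)" "\<forall>(A, i)\<in>D. Cmp C A Y (fst d) g i = ?h (A, i)" by blast
    then show "\<exists>g. g \<in> Hom C Y (fst d) \<and> (\<forall>e\<in>D. Cmp C (fst e) Y (fst d) g (snd e) = ?h e)"
      by (intro exI[of _ g]) auto
  qed
  then obtain p where p: "\<forall>d\<in>D. p d \<in> Hom C Y (fst d) \<and> (\<forall>e\<in>D. Cmp C (fst e) Y (fst d) (p d) (snd e) =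
          (if e = d then Idm C (fst d) else Zero C (fst e) (fst d)))"
    by (metis bchoice)
  have uniq: "g = g'" if "g \<in> Hom C Y Y" "g' \<in> Hom C Y Y"
        "\<forall>d\<in>D. Cmp C (fst d) Y Y g (snd d) = snd d"
        "\<forall>d\<in>D. Cmp C (fst d) Y Y g' (snd d) = snd d" for g g'
  proof -
    have "\<forall>(A, i)\<in>D. snd (A, i) \<in> Hom C A Y" using DA by auto
    from univ[OF Y this] have "\<exists>!g. g \<in> Hom C Y Y \<and> (\<forall>(A, i)\<in>D. Cmp C A Y Y g i = snd (A, i))" .
    moreover have "\<forall>(A, i)\<in>D. Cmp C A Y Y g i = snd (A, i)" "\<forall>(A, i)\<in>D. Cmp C A Y Y g' i = snd (A, i)"
      using that(3,4) by auto
    ultimately show ?thesis using that(1,2) by blast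
  qed
  interpret dsum C I Y D p
    by (unfold_locales) (use Y DOb Di uniq loc p in auto)
  show ?thesis by (rule maxL_I[OF finite_D[OF bspec[OF art Y]] noid M])
qed
end

theorem mainTheorem8:
  fixes C :: "('o, 'm, 'k::field_char_0) lincat"
    and I :: "'o \<Rightarrow> 'o \<Rightarrow> 'm set"
  assumes "algebraically_closed_field TYPE('k)"
    and "k_linear_category C"
    and "KRSA C"
    and "\<forall>X\<in>Ob C. artinian (End_ring C X)"
    and "admissible C I"
  shows "\<forall>X\<in>Ob C. \<forall>Y\<in>Ob C.
           Rad (quotient_cat C I) X Y = coset C I X Y ` Rad C X Y"
proof (intro ballI)
  fix X Y assume X: "X \<in> Ob C" and Y: "Y \<in> Ob C"
  interpret klci C I
    using assms(2,5) unfolding admissible_def by unfold_locales auto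
  have noid: "\<forall>A\<in>Ob C. Idm C A \<notin> I A A" using id_notin_I[OF assms(5)] by blast
  interpret H: surj_hom "End_ring C Y" "End_ring (quotient_cat C I) Y" "coset C I Y Y"
    by (rule quot_hom[OF Y])
  have QH: "\<And>X Y. Hom (quotient_cat C I) X Y = coset C I X Y ` Hom C X Y"
    by (simp add: quotient_cat_def)
  have ker: "{x \<in> carrier (End_ring C Y). coset C I Y Y x = \<zero>\<^bsub>End_ring (quotient_cat C I) Y\<^esub>} \<subseteq> L"
    if M: "maximal_left_ideal (End_ring C Y) L" for L
  proof
    fix x assume "x \<in> {x \<in> carrier (End_ring C Y). coset C I Y Y x = \<zero>\<^bsub>End_ring (quotient_cat C I) Y\<^esub>}"
    then have "x \<in> Hom C Y Y" "coset C I Y Y x = coset C I Y Y (Zero C Y Y)"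
      by (auto simp: End_ring_def quotient_cat_def)
    then have "x \<in> I Y Y" using coset_ker[OF Y Y] by blast
    then show "x \<in> L" using maxL_contains[OF assms(3,4) noid Y M] by blast
  qed
  show "Rad (quotient_cat C I) X Y = coset C I X Y ` Rad C X Y"
  proof
    show "Rad (quotient_cat C I) X Y \<subseteq> coset C I X Y ` Rad C X Y"
    proof
      fix F assume F: "F \<in> Rad (quotient_cat C I) X Y"
      then obtain f where f: "f \<in> Hom C X Y" "F = coset C I X Y f"
        unfolding Rad_def QH by auto
      have "f \<in> Rad C X Y" unfolding Rad_def
      proof (intro CollectI conjI ballI f(1))
        fix g assume g: "g \<in> Hom C Y X"
        have "Cmp (quotient_cat C I) Y X Y F (coset C I Y X g) \<in> jacobson (End_ring (quotient_cat C I) Y)"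
          using F g unfolding Rad_def QH by auto
        then have "coset C I Y Y (Cmp C Y X Y f g) \<in> jacobson (End_ring (quotient_cat C I) Y)"
          using cmp_coset[OF Y X Y g f(1)] f(2) by simp
        moreover have "Cmp C Y X Y f g \<in> carrier (End_ring C Y)" using f g X Y by auto
        ultimately show "Cmp C Y X Y f g \<in> jacobson (End_ring C Y)"
          using H.jac_preimage[OF ker] by blast
      qed
      then show "F \<in> coset C I X Y ` Rad C X Y" using f(2) by blast
    qed
    show "coset C I X Y ` Rad C X Y \<subseteq> Rad (quotient_cat C I) X Y"
    proof
      fix F assume "F \<in> coset C I X Y ` Rad C X Y"
      then obtain f where f: "f \<in> Rad C X Y" "F = coset C I X Y f" by blast
      have fh: "f \<in> Hom C X Y" using f unfolding Rad_def by auto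
      show "F \<in> Rad (quotient_cat C I) X Y" unfolding Rad_def
      proof (intro CollectI conjI ballI)
        show "F \<in> Hom (quotient_cat C I) X Y" unfolding QH using f fh by blast
        fix G assume "G \<in> Hom (quotient_cat C I) Y X"
        then obtain g where g: "g \<in> Hom C Y X" "G = coset C I Y X g" unfolding QH by blast
        have "Cmp C Y X Y f g \<in> jacobson (End_ring C Y)" using f g unfolding Rad_def by auto
        then have "coset C I Y Y (Cmp C Y X Y f g) \<in> jacobson (End_ring (quotient_cat C I) Y)"
          by (rule H.jac_image)
        then show "Cmp (quotient_cat C I) Y X Y F G \<in> jacobson (End_ring (quotient_cat C I) Y)"
          using cmp_coset[OF Y X Y g(1) fh] f(2) g(2) by simp
      qed
    qed
  qed
qed

end
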